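(* Let $I_S>0$ and define the monopoly SP's net revenue as a function of the small-cell deployment density $\lambda\ge 0$ by $$S(\lambda)=\begin{cases}(BR_0)^{1-\alpha}(N_m+N_f)^{\alpha}-I_S\lambda, & 0\le\lambda\le 1,\\ (BR_0)^{1-\alpha}\big(N_m+\lambda^{\frac1\alpha-1}N_f\big)^{\alpha}-I_S\lambda, & \lambda>1.\end{cases}$$ Then every maximizer $\lambda^{\mathrm{rev}}$ of $S$ over $[0,\infty)$ satisfies either $\lambda^{\mathrm{rev}}=0$ or $\lambda^{\mathrm{rev}}=\lambda^*$, where $\lambda^*>1$ solves $$N_f(1-\alpha)(BR_0)^{1-\alpha}(\lambda^* )^{\frac1\alpha-2}\big(N_f(\lambda^* )^{\frac1\alpha-1}+N_m\big)^{\alpha-1}=I_S. \qquad (P1)$$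
   Context: Parameters: $\alpha\in(0,1)$; densities $N_m>0$ of mobile users and $N_f>0$ of fixed users; spectral efficiency $R_0>0$; SP bandwidth $B>0$; investment cost $I_S>0$ per unit small-cell density (the SP pays $I_S\lambda$ to deploy density $\lambda$). Users have utility $u(r)=\frac{r^{1-\alpha}}{1-\alpha}$. The function $S(\lambda)$ is the SP's revenue minus investment cost when, for a given density $\lambda$, it uses its revenue-optimal bandwidth split and market-clearing prices: for $\lambda\le 1$ all bandwidth goes to macro-cells; for $\lambda>1$ it allocates $B_S=\frac{\epsilon N_fB}{\epsilon N_f+N_m}$, $B_M=\frac{N_mB}{\epsilon N_f+N_m}$ with $\epsilon=\lambda^{1/\alpha-1}$. *)

theory Defs
  imports Complex_Main
begin

definition S_rev :: "real \<Rightarrow> real \<Rightarrow> real \<Rightarrow> real \<Rightarrow> real \<Rightarrow> real \<Rightarrow> real \<Rightarrow> real" where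
  "S_rev \<alpha> Nm Nf R0 B IS lam =
     (if lam \<le> 1 then (B * R0) powr (1 - \<alpha>) * (Nm + Nf) powr \<alpha> - IS * lam
      else (B * R0) powr (1 - \<alpha>) * (Nm + lam powr (1 / \<alpha> - 1) * Nf) powr \<alpha> - IS * lam)"

end

theory Submission
  imports Defs
begin

theorem theorem4:
  fixes \<alpha> Nm Nf R0 B IS lrev :: real
  assumes "0 < \<alpha>" "\<alpha> < 1" "0 < Nm" "0 < Nf" "0 < R0" "0 < B" "0 < IS"
    and "0 \<le> lrev"
    and "\<forall>lam\<ge>0. S_rev \<alpha> Nm Nf R0 B IS lam \<le> S_rev \<alpha> Nm Nf R0 B IS lrev"
  shows "lrev = 0 \<or>
    (lrev > 1 \<and>
     Nf * (1 - \<alpha>) * (B * R0) powr (1 - \<alpha>) * lrev powr (1 / \<alpha> - 2)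
       * (Nf * lrev powr (1 / \<alpha> - 1) + Nm) powr (\<alpha> - 1) = IS)"
proof -
  define K where "K = (B * R0) powr (1 - \<alpha>)"
  define p where "p = 1 / \<alpha> - 1"
  have max: "\<And>lam. lam \<ge> 0 \<Longrightarrow> S_rev \<alpha> Nm Nf R0 B IS lam \<le> S_rev \<alpha> Nm Nf R0 B IS lrev"
    using assms(9) by blast
  show ?thesis
  proof (cases "lrev = 0")
    case True then show ?thesis by simp
  next
    case False
    hence lpos: "lrev > 0" using assms(8) by simp
    have gt1: "lrev > 1"
    proof (rule ccontr)
      assume "\<not> lrev > 1"
      hence "S_rev \<alpha> Nm Nf R0 B IS lrev < S_rev \<alpha> Nm Nf R0 B IS 0"
        using lpos assms(7) by (simp add: S_rev_def)
      with max[of 0] show False by simp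
    qed
    define g where "g = (\<lambda>y. K * (Nm + y powr p * Nf) powr \<alpha> - IS * y)"
    have gS: "g y = S_rev \<alpha> Nm Nf R0 B IS y" if "y > 1" for y
      using that by (simp add: g_def S_rev_def K_def p_def)
    have base: "Nm + lrev powr p * Nf > 0" using assms(3,4) lpos by (simp add: add_pos_nonneg)
    have d1: "((\<lambda>y. y powr p * Nf) has_real_derivative (p * lrev powr (p - 1) * Nf)) (at lrev)"
      using has_real_derivative_powr[OF lpos, of p] by (auto intro: DERIV_cmult_right)
    have d2: "((\<lambda>y. Nm + y powr p * Nf) has_real_derivative (p * lrev powr (p - 1) * Nf)) (at lrev)"
      using DERIV_add[OF DERIV_const[of Nm] d1] by simp
    have d3: "((\<lambda>y. (Nm + y powr p * Nf) powr \<alpha>) has_real_derivative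
       (\<alpha> * (Nm + lrev powr p * Nf) powr (\<alpha> - 1) * (p * lrev powr (p - 1) * Nf))) (at lrev)"
      using DERIV_fun_powr[OF d2 base, of \<alpha>] by simp
    define D where "D = K * (\<alpha> * (Nm + lrev powr p * Nf) powr (\<alpha> - 1) * (p * lrev powr (p - 1) * Nf)) - IS"
    have dg: "(g has_real_derivative D) (at lrev)"
      unfolding g_def D_def
    proof (intro DERIV_diff DERIV_cmult d3)
      show "((*) IS has_real_derivative IS) (at lrev)"
        using DERIV_cmult[OF DERIV_ident, of IS] by simp
    qed
    have "D = 0"
    proof (rule DERIV_local_max[OF dg, of "lrev - 1"])
      show "0 < lrev - 1" using gt1 by simp
      show "\<forall>y. \<bar>lrev - y\<bar> < lrev - 1 \<longrightarrow> g y \<le> g lrev"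
      proof (intro allI impI)
        fix y assume "\<bar>lrev - y\<bar> < lrev - 1"
        hence "y > 1" by (simp add: abs_less_iff)
        thus "g y \<le> g lrev" using gS[of y] gS[OF gt1] max[of y] by simp
      qed
    qed
    moreover have "\<alpha> * p = 1 - \<alpha>" using assms(1) by (simp add: p_def field_simps)
    moreover have "p - 1 = 1 / \<alpha> - 2" by (simp add: p_def)
    ultimately have "K * ((1 - \<alpha>) * (Nm + lrev powr p * Nf) powr (\<alpha> - 1) * (lrev powr (1/\<alpha> - 2) * Nf)) = IS"
      unfolding D_def by (metis (no_types, lifting) ab_semigroup_mult_class.mult_ac(1) eq_iff_diff_eq_0 mult.left_commute)
    thus ?thesis using gt1 by (simp add: K_def p_def algebra_simps)
  qed
qed

end
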